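(* For $n\ge 1$, the number of shallow $123$-avoiding involutions in $S_n$ equals $\lfloor n^2/4\rfloor+1$.
   Context: For $\pi\in S_n$: $D(\pi)=\sum_{i}|\pi_i-i|$, $I(\pi)$ is the number of inversions, $T(\pi)=n-\mathrm{cyc}(\pi)$ with $\mathrm{cyc}$ the number of cycles in the disjoint cycle decomposition; $\pi$ is shallow if $I(\pi)+T(\pi)=D(\pi)$. A permutation avoids a pattern $\sigma$ if it has no subsequence order-isomorphic to $\sigma$. An involution is a permutation with $\pi=\pi^{-1}$. *)

theory Defs
  imports "HOL-Combinatorics.Combinatorics"
begin

text \<open>Permutations of [n] = {1..n} are functions p :: nat => nat with p permutes {1..n}.\<close>

definition disp :: "nat \<Rightarrow> (nat \<Rightarrow> nat) \<Rightarrow> nat" where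
  "disp n p = (\<Sum>i\<in>{1..n}. nat \<bar>int (p i) - int i\<bar>)"

definition inv_count :: "nat \<Rightarrow> (nat \<Rightarrow> nat) \<Rightarrow> nat" where
  "inv_count n p = card {(i, j). i \<in> {1..n} \<and> j \<in> {1..n} \<and> i < j \<and> p i > p j}"

definition num_cycles :: "nat \<Rightarrow> (nat \<Rightarrow> nat) \<Rightarrow> nat" where
  "num_cycles n p = card (orbit p ` {1..n})"

definition refl_len :: "nat \<Rightarrow> (nat \<Rightarrow> nat) \<Rightarrow> nat" where
  "refl_len n p = n - num_cycles n p"

definition shallow :: "nat \<Rightarrow> (nat \<Rightarrow> nat) \<Rightarrow> bool" where
  "shallow n p \<longleftrightarrow> inv_count n p + refl_len n p = disp n p"

definition contains_pattern :: "nat \<Rightarrow> (nat \<Rightarrow> nat) \<Rightarrow> nat \<Rightarrow> (nat \<Rightarrow> nat) \<Rightarrow> bool" where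
  "contains_pattern n p k s \<longleftrightarrow>
     (\<exists>f. strict_mono_on {1..k} f \<and> f ` {1..k} \<subseteq> {1..n} \<and>
          (\<forall>a\<in>{1..k}. \<forall>b\<in>{1..k}. p (f a) < p (f b) \<longleftrightarrow> s a < s b))"

definition avoids :: "nat \<Rightarrow> (nat \<Rightarrow> nat) \<Rightarrow> nat \<Rightarrow> (nat \<Rightarrow> nat) \<Rightarrow> bool" where
  "avoids n p k s \<longleftrightarrow> \<not> contains_pattern n p k s"

definition pat123 :: "nat \<Rightarrow> nat" where
  "pat123 = id"

definition involution :: "(nat \<Rightarrow> nat) \<Rightarrow> bool" where
  "involution p \<longleftrightarrow> p \<circ> p = id"

end

theory Submission
  imports Defs
begin


definition no123 :: "nat \<Rightarrow> nat \<Rightarrow> (nat \<Rightarrow> nat) \<Rightarrow> bool" where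
  "no123 l r p \<longleftrightarrow> (\<forall>i j k. l \<le> i \<longrightarrow> i < j \<longrightarrow> j < k \<longrightarrow> k \<le> r \<longrightarrow> \<not> (p i < p j \<and> p j < p k))"

definition noncross :: "nat \<Rightarrow> nat \<Rightarrow> (nat \<Rightarrow> nat) \<Rightarrow> bool" where
  "noncross l r p \<longleftrightarrow> \<not> (\<exists>a c. l \<le> a \<and> a < c \<and> c < p a \<and> p a < p c \<and> p c \<le> r)"

definition SS :: "nat \<Rightarrow> nat \<Rightarrow> (nat \<Rightarrow> nat) set" where
  "SS l r = {p. p permutes {l..r} \<and> p \<circ> p = id \<and> no123 l r p \<and> noncross l r p}"

definition rev2 :: "nat \<Rightarrow> nat \<Rightarrow> nat \<Rightarrow> nat \<Rightarrow> nat" where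
  "rev2 l m r i = (if l \<le> i \<and> i \<le> m then l + m - i else if m < i \<and> i \<le> r then m + 1 + r - i else i)"

definition wrap :: "nat \<Rightarrow> nat \<Rightarrow> (nat \<Rightarrow> nat) \<Rightarrow> nat \<Rightarrow> nat" where
  "wrap l r q i = (if i = l then r else if i = r then l else q i)"

lemma inv_permutes:
  assumes "\<And>x. p (p x) = x" "\<And>x. x \<notin> S \<Longrightarrow> p x = x"
  shows "p permutes S"
  unfolding permutes_def
proof (intro conjI allI impI)
  fix y show "\<exists>!x. p x = y" by (rule ex1I[of _ "p y"]) (metis assms(1))+
qed (use assms in auto)

lemma comp_id_pp: "p \<circ> p = id \<Longrightarrow> p (p x) = x"
  by (metis comp_apply id_apply)

lemma dec_upper:
  fixes a b k :: nat and f :: "nat \<Rightarrow> nat"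
  assumes "\<And>i. a \<le> i \<Longrightarrow> i \<le> b \<Longrightarrow> f i \<le> b"
    and "\<And>i j. a \<le> i \<Longrightarrow> i < j \<Longrightarrow> j \<le> b \<Longrightarrow> f j < f i"
  shows "a + k \<le> b \<Longrightarrow> f (a + k) + k \<le> b"
proof (induction k)
  case 0 then show ?case using assms(1)[of a] by simp
next
  case (Suc k)
  then have "f (a + Suc k) < f (a + k)" using assms(2)[of "a+k" "a + Suc k"] by simp
  with Suc show ?case by simp
qed

lemma dec_lower:
  fixes a b k :: nat and f :: "nat \<Rightarrow> nat"
  assumes "\<And>i. a \<le> i \<Longrightarrow> i \<le> b \<Longrightarrow> a \<le> f i"
    and "\<And>i j. a \<le> i \<Longrightarrow> i < j \<Longrightarrow> j \<le> b \<Longrightarrow> f j < f i"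
  shows "a + k \<le> b \<Longrightarrow> a + k \<le> f (b - k)"
proof (induction k)
  case 0 then show ?case using assms(1)[of b] by simp
next
  case (Suc k)
  then have "f (b - k) < f (b - Suc k)" using assms(2)[of "b - Suc k" "b - k"] by simp
  with Suc show ?case by simp
qed

lemma dec_rev:
  fixes a b i :: nat and f :: "nat \<Rightarrow> nat"
  assumes "\<And>i. a \<le> i \<Longrightarrow> i \<le> b \<Longrightarrow> a \<le> f i \<and> f i \<le> b"
    and "\<And>i j. a \<le> i \<Longrightarrow> i < j \<Longrightarrow> j \<le> b \<Longrightarrow> f j < f i"
    and "a \<le> i" "i \<le> b"
  shows "f i = a + b - i"
proof -
  have 1: "f (a + (i - a)) + (i - a) \<le> b"
    by (rule dec_upper[of a b f]) (use assms in \<open>auto simp: le_diff_conv2\<close>)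
  have 2: "a + (b - i) \<le> f (b - (b - i))"
    by (rule dec_lower[of a b f]) (use assms in \<open>auto simp: le_diff_conv2\<close>)
  from 1 2 assms(3,4) show ?thesis by simp
qed



lemma rev2_pp: "l \<le> m \<Longrightarrow> m < r \<Longrightarrow> rev2 l m r (rev2 l m r x) = x"
  unfolding rev2_def by auto

lemma rev2_in:
  assumes "l \<le> m" "m < r"
  shows "rev2 l m r \<in> SS l r"
proof -
  let ?p = "rev2 l m r"
  have pp: "\<And>x. ?p (?p x) = x" using rev2_pp assms by blast
  have perm: "?p permutes {l..r}"
    by (rule inv_permutes[OF pp]) (use assms in \<open>auto simp: rev2_def\<close>)
  have inv: "?p \<circ> ?p = id" using pp by auto
  have n1: "no123 l r ?p"
    unfolding no123_def
  proof (intro allI impI notI)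
    fix i j k assume h: "l \<le> i" "i < j" "j < k" "k \<le> r" "?p i < ?p j \<and> ?p j < ?p k"
    show False
    proof (cases "j \<le> m")
      case True then show ?thesis using h assms by (auto simp: rev2_def split: if_splits)
    next
      case False then show ?thesis using h assms by (auto simp: rev2_def split: if_splits)
    qed
  qed
  have n2: "noncross l r ?p"
    unfolding noncross_def
  proof
    assume "\<exists>a c. l \<le> a \<and> a < c \<and> c < ?p a \<and> ?p a < ?p c \<and> ?p c \<le> r"
    then obtain a c where h: "l \<le> a" "a < c" "c < ?p a" "?p a < ?p c" "?p c \<le> r" by blast
    show False
    proof (cases "a \<le> m")
      case True then show ?thesis using h assms by (auto simp: rev2_def split: if_splits)
    next
      case False then show ?thesis using h assms by (auto simp: rev2_def split: if_splits)
    qed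
  qed
  show ?thesis using perm inv n1 n2 by (simp add: SS_def)
qed

lemma SS_fix: "p \<in> SS l r \<Longrightarrow> x \<notin> {l..r} \<Longrightarrow> p x = x"
  using permutes_not_in[of p "{l..r}" x] by (simp add: SS_def del: atLeastAtMost_iff)

lemma SS_in: "p \<in> SS l r \<Longrightarrow> x \<in> {l..r} \<Longrightarrow> p x \<in> {l..r}"
  by (simp add: SS_def permutes_in_image del: atLeastAtMost_iff)

lemma SS_pp: "p \<in> SS l r \<Longrightarrow> p (p x) = x"
  by (simp add: SS_def comp_id_pp)

lemma wrap_in:
  assumes "l \<le> r" "q \<in> SS (l+1) (r-1)"
  shows "wrap l r q \<in> SS l r"
proof -
  let ?p = "wrap l r q"
  have ql: "q l = l" using SS_fix[OF assms(2), of l] by simp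
  have qr: "q r = r" using SS_fix[OF assms(2), of r] assms(1) by (cases r) auto
  have qq: "\<And>x. q (q x) = x" using SS_pp[OF assms(2)] .
  have qin: "l < q x \<and> q x < r" if "l < x" "x < r" for x
    using SS_in[OF assms(2), of x] that by (cases r) auto
  have qout: "q x = x" if "\<not> (l < x \<and> x < r)" for x
    using SS_fix[OF assms(2), of x] that by (cases r) auto
  have pp: "?p (?p x) = x" for x
  proof (cases "x = l")
    case True then show ?thesis by (simp add: wrap_def)
  next
    case False note xl = this
    show ?thesis
    proof (cases "x = r")
      case True then show ?thesis using xl by (simp add: wrap_def)
    next
      case False
      have "q x \<noteq> l" using xl ql qq by metis
      moreover have "q x \<noteq> r" using False qr qq by metis
      ultimately show ?thesis using xl False qq by (simp add: wrap_def)
    qed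
  qed
  have perm: "?p permutes {l..r}"
    by (rule inv_permutes[OF pp]) (use assms(1) in \<open>auto simp: wrap_def qout\<close>)
  have inv: "?p \<circ> ?p = id" using pp by auto
  have pin: "l \<le> ?p x \<and> ?p x \<le> r" if "l \<le> x" "x \<le> r" for x
  proof -
    have "x = l \<or> x = r \<or> (l < x \<and> x < r)" using that by auto
    then show ?thesis using qin[of x] that by (auto simp: wrap_def)
  qed
  have n1: "no123 l r ?p"
    unfolding no123_def
  proof (intro allI impI notI)
    fix i j k assume h: "l \<le> i" "i < j" "j < k" "k \<le> r" "?p i < ?p j \<and> ?p j < ?p k"
    have "l < i"
    proof (rule ccontr)
      assume "\<not> l < i" then have "i = l" using h by simp
      then have "?p i = r" by (simp add: wrap_def)
      moreover have "?p j \<le> r" using pin[of j] h by simp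
      ultimately show False using h by simp
    qed
    moreover have "k < r"
    proof (rule ccontr)
      assume "\<not> k < r" then have "k = r" using h by simp
      then have "?p k = l" using h by (simp add: wrap_def)
      moreover have "l \<le> ?p j" using pin[of j] h by simp
      ultimately show False using h by simp
    qed
    ultimately have "?p i = q i" "?p j = q j" "?p k = q k" using h by (auto simp: wrap_def)
    moreover have "no123 (l+1) (r-1) q" using assms(2) by (simp add: SS_def)
    moreover have "l + 1 \<le> i" "k \<le> r - 1" using \<open>l < i\<close> \<open>k < r\<close> by auto
    ultimately have "\<not> (q i < q j \<and> q j < q k)"
      unfolding no123_def using h by blast
    with \<open>?p i = q i\<close> \<open>?p j = q j\<close> \<open>?p k = q k\<close> show False using h by simp
  qed
  have n2: "noncross l r ?p"
    unfolding noncross_def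
  proof
    assume "\<exists>a c. l \<le> a \<and> a < c \<and> c < ?p a \<and> ?p a < ?p c \<and> ?p c \<le> r"
    then obtain a c where h: "l \<le> a" "a < c" "c < ?p a" "?p a < ?p c" "?p c \<le> r" by blast
    have "a \<noteq> l" using h by (auto simp: wrap_def)
    moreover have "a < r"
    proof (rule ccontr)
      assume "\<not> a < r"
      then have "?p a = (if a = r then l else a)" using qout \<open>a \<noteq> l\<close> h(1) by (auto simp: wrap_def)
      then show False using h by (auto split: if_splits)
    qed
    ultimately have pa: "?p a = q a" and qa: "l < q a \<and> q a < r" using h qin[of a] by (auto simp: wrap_def)
    have "c < r" "l < c" using h pa qa by auto
    then have pc: "?p c = q c" and qc: "q c < r" using qin[of c] by (auto simp: wrap_def)
    have "noncross (l+1) (r-1) q" using assms(2) by (simp add: SS_def)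
    moreover have "l+1 \<le> a \<and> a < c \<and> c < q a \<and> q a < q c \<and> q c \<le> r-1"
      using h pa pc qc \<open>a \<noteq> l\<close> by simp
    ultimately show False unfolding noncross_def by blast
  qed
  show ?thesis using perm inv n1 n2 by (simp add: SS_def)
qed



lemma SS_cases:
  assumes "l \<le> r" "p \<in> SS l r"
  shows "(\<exists>m\<in>{l..<r}. p = rev2 l m r) \<or> (\<exists>q\<in>SS (l+1) (r-1). p = wrap l r q)"
proof -
  have pp: "\<And>x. p (p x) = x" using SS_pp[OF assms(2)] .
  have pin: "l \<le> p x \<and> p x \<le> r" if "l \<le> x" "x \<le> r" for x
    using SS_in[OF assms(2), of x] that by auto
  have pout: "p x = x" if "\<not> (l \<le> x \<and> x \<le> r)" for x
    using SS_fix[OF assms(2), of x] that by auto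
  have N1: "no123 l r p" and N2: "noncross l r p" using assms(2) by (auto simp: SS_def)
  have inj: "p x = p y \<Longrightarrow> x = y" for x y by (metis pp)
  show ?thesis
  proof (cases "p l = r")
    case True
    define q where "q = (\<lambda>i. if i = l \<or> i = r then i else p i)"
    have pr: "p r = l" using True pp by metis
    have qq: "q (q x) = x" for x
    proof (cases "x = l \<or> x = r")
      case True then show ?thesis by (simp add: q_def)
    next
      case False
      then have "p x \<noteq> l" "p x \<noteq> r" using pp True pr by metis+
      then show ?thesis using False pp by (simp add: q_def)
    qed
    have qout: "q x = x" if "\<not> (l + 1 \<le> x \<and> x \<le> r - 1)" for x
    proof -
      have "x = l \<or> x = r \<or> \<not> (l \<le> x \<and> x \<le> r)" using that by auto
      then show ?thesis using pout[of x] by (auto simp: q_def)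
    qed
    have qperm: "q permutes {l+1..r-1}"
      by (rule inv_permutes[OF qq]) (use qout in auto)
    have qinv: "q \<circ> q = id" using qq by auto
    have qn1: "no123 (l+1) (r-1) q"
      unfolding no123_def
    proof (intro allI impI notI)
      fix i j k assume h: "l+1 \<le> i" "i < j" "j < k" "k \<le> r-1" "q i < q j \<and> q j < q k"
      have "q i = p i" "q j = p j" "q k = p k" using h by (auto simp: q_def)
      moreover have "l \<le> i" "k \<le> r" using h by auto
      moreover have "\<not> (p i < p j \<and> p j < p k)"
        using N1 h \<open>l \<le> i\<close> \<open>k \<le> r\<close> unfolding no123_def by blast
      ultimately show False using h by simp
    qed
    have qn2: "noncross (l+1) (r-1) q"
      unfolding noncross_def
    proof
      assume "\<exists>a c. l+1 \<le> a \<and> a < c \<and> c < q a \<and> q a < q c \<and> q c \<le> r-1"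
      then obtain a c where h: "l+1 \<le> a" "a < c" "c < q a" "q a < q c" "q c \<le> r-1" by blast
      have "a < r"
      proof (rule ccontr)
        assume "\<not> a < r" then have "q a = a" using qout[of a] h by (cases r) auto
        then show False using h by simp
      qed
      have "c < r"
      proof (rule ccontr)
        assume "\<not> c < r" then have "q c = c" using qout[of c] h by (cases r) auto
        then show False using h by simp
      qed
      have "q a = p a" "q c = p c" using h \<open>a < r\<close> \<open>c < r\<close> by (auto simp: q_def)
      then have "l \<le> a \<and> a < c \<and> c < p a \<and> p a < p c \<and> p c \<le> r" using h by auto
      then show False using N2 unfolding noncross_def by blast
    qed
    have "q \<in> SS (l+1) (r-1)" using qperm qinv qn1 qn2 by (simp add: SS_def)
    moreover have "p = wrap l r q"
    proof
      fix x show "p x = wrap l r q x" using True pr by (auto simp: wrap_def q_def)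
    qed
    ultimately show ?thesis by blast
  next
    case False
    define m where "m = p l"
    have mlr: "l \<le> m" "m < r" using pin[of l] assms(1) False by (auto simp: m_def)
    have pm: "p m = l" using pp m_def by metis
    have inv1: "l \<le> p x \<and> p x \<le> m" if "l \<le> x" "x \<le> m" for x
    proof (rule ccontr)
      assume nx: "\<not> (l \<le> p x \<and> p x \<le> m)"
      have px: "l \<le> p x" "p x \<le> r" using pin[of x] that mlr by auto
      with nx have "m < p x" by auto
      have "x \<noteq> l" "x \<noteq> m" using \<open>m < p x\<close> pm mlr m_def by auto
      then have "l \<le> l \<and> l < x \<and> x < p l \<and> p l < p x \<and> p x \<le> r"
        using that \<open>m < p x\<close> px m_def by auto
      then show False using N2 unfolding noncross_def by blast
    qed
    have inv2: "m < p x \<and> p x \<le> r" if "m < x" "x \<le> r" for x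
    proof (rule ccontr)
      assume nx: "\<not> (m < p x \<and> p x \<le> r)"
      have px: "l \<le> p x" "p x \<le> r" using pin[of x] that mlr by auto
      with nx have "p x \<le> m" by auto
      then have "p (p x) \<le> m" using inv1[of "p x"] px by auto
      then show False using pp that by simp
    qed
    have dec1: "p j < p i" if "l \<le> i" "i < j" "j \<le> m" for i j
    proof (rule ccontr)
      assume "\<not> p j < p i"
      moreover have "p i \<noteq> p j" using inj that by auto
      ultimately have "p i < p j" by simp
      moreover have "p j < p r" using inv1[of j] inv2[of r] that mlr by auto
      moreover have "j < r" using that mlr by simp
      ultimately show False using N1 that unfolding no123_def by blast
    qed
    have dec2: "p j < p i" if "m + 1 \<le> i" "i < j" "j \<le> r" for i j
    proof (rule ccontr)
      assume "\<not> p j < p i"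
      moreover have "p i \<noteq> p j" using inj that by auto
      ultimately have "p i < p j" by simp
      moreover have "p l < p i" using inv2[of i] that m_def by auto
      moreover have "l < i" using that mlr by simp
      ultimately show False using N1 that unfolding no123_def by blast
    qed
    have "p = rev2 l m r"
    proof
      fix x
      show "p x = rev2 l m r x"
      proof (cases "l \<le> x \<and> x \<le> m")
        case True
        have "p x = l + m - x"
          by (rule dec_rev[of l m p]) (use inv1 dec1 True in auto)
        then show ?thesis using True by (simp add: rev2_def)
      next
        case F1: False
        show ?thesis
        proof (cases "m < x \<and> x \<le> r")
          case True
          have "p x = (m+1) + r - x"
            by (rule dec_rev[of "m+1" r p]) (use inv2 dec2 True in \<open>auto simp: Suc_le_eq\<close>)
          then show ?thesis using True F1 by (simp add: rev2_def)
        next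
          case False
          then have "\<not> (l \<le> x \<and> x \<le> r)" using F1 by auto
          then show ?thesis using pout[of x] F1 False mlr by (auto simp: rev2_def)
        qed
      qed
    qed
    then show ?thesis using mlr by auto
  qed
qed



lemma SS_empty:
  assumes "r < l" shows "SS l r = {id}"
proof -
  have e: "{l..r} = {}" using assms by auto
  have "id \<in> SS l r" unfolding SS_def no123_def noncross_def e using assms by auto
  moreover have "p = id" if "p \<in> SS l r" for p using that unfolding SS_def e by simp
  ultimately show ?thesis by blast
qed

lemma SS_fin: "finite (SS l r)"
proof -
  have "SS l r \<subseteq> {p. p permutes {l..r}}" by (auto simp: SS_def)
  moreover have "finite {p. p permutes {l..r}}" by (rule finite_permutations) simp
  ultimately show ?thesis by (rule finite_subset)
qed

lemma SS_rec:
  assumes "l \<le> r"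
  shows "card (SS l r) = (r - l) + card (SS (l+1) (r-1))"
proof -
  have eq: "SS l r = (\<lambda>m. rev2 l m r) ` {l..<r} \<union> wrap l r ` SS (l+1) (r-1)"
  proof
    show "SS l r \<subseteq> (\<lambda>m. rev2 l m r) ` {l..<r} \<union> wrap l r ` SS (l+1) (r-1)"
    proof
      fix p assume "p \<in> SS l r"
      from SS_cases[OF assms this]
      show "p \<in> (\<lambda>m. rev2 l m r) ` {l..<r} \<union> wrap l r ` SS (l+1) (r-1)"
      proof
        assume "\<exists>m\<in>{l..<r}. p = rev2 l m r"
        then obtain m where "m \<in> {l..<r}" "p = rev2 l m r" by blast
        then show ?thesis by auto
      next
        assume "\<exists>q\<in>SS (l+1) (r-1). p = wrap l r q"
        then obtain q where "q \<in> SS (l+1) (r-1)" "p = wrap l r q" by blast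
        then show ?thesis by auto
      qed
    qed
    show "(\<lambda>m. rev2 l m r) ` {l..<r} \<union> wrap l r ` SS (l+1) (r-1) \<subseteq> SS l r"
    proof
      fix p assume "p \<in> (\<lambda>m. rev2 l m r) ` {l..<r} \<union> wrap l r ` SS (l+1) (r-1)"
      then show "p \<in> SS l r"
      proof
        assume "p \<in> (\<lambda>m. rev2 l m r) ` {l..<r}"
        then obtain m where "m \<in> {l..<r}" "p = rev2 l m r" by auto
        then show ?thesis using rev2_in[of l m r] by simp
      next
        assume "p \<in> wrap l r ` SS (l+1) (r-1)"
        then obtain q where "q \<in> SS (l+1) (r-1)" "p = wrap l r q" by auto
        then show ?thesis using wrap_in[OF assms] by simp
      qed
    qed
  qed
  have disj: "(\<lambda>m. rev2 l m r) ` {l..<r} \<inter> wrap l r ` SS (l+1) (r-1) = {}"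
  proof -
    have neq: "rev2 l m r l \<noteq> wrap l r q l" if "m \<in> {l..<r}" for m q
      using that by (simp add: rev2_def wrap_def)
    show ?thesis
    proof (intro equals0I)
      fix p assume "p \<in> (\<lambda>m. rev2 l m r) ` {l..<r} \<inter> wrap l r ` SS (l+1) (r-1)"
      then obtain m q where "m \<in> {l..<r}" "p = rev2 l m r" "p = wrap l r q" by auto
      then have "rev2 l m r l = wrap l r q l" by simp
      with \<open>m \<in> {l..<r}\<close> neq show False by blast
    qed
  qed
  have inj1': "inj_on (\<lambda>m. rev2 l m r) {l..<r}"
  proof (rule inj_onI)
    fix m m' assume "m \<in> {l..<r}" "m' \<in> {l..<r}" "rev2 l m r = rev2 l m' r"
    then have "rev2 l m r l = rev2 l m' r l" by simp
    with \<open>m \<in> {l..<r}\<close> \<open>m' \<in> {l..<r}\<close> show "m = m'" by (simp add: rev2_def)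
  qed
  have inj2: "inj_on (wrap l r) (SS (l+1) (r-1))"
  proof (rule inj_onI)
    fix q q' assume q: "q \<in> SS (l+1) (r-1)" and q': "q' \<in> SS (l+1) (r-1)"
      and e: "wrap l r q = wrap l r q'"
    have "q l = l" "q' l = l" using SS_fix[OF q, of l] SS_fix[OF q', of l] by auto
    moreover have "q r = r" "q' r = r"
      using SS_fix[OF q, of r] SS_fix[OF q', of r] assms by (cases r; auto)+
    ultimately show "q = q'"
    proof -
      assume a: "q l = l" "q' l = l" "q r = r" "q' r = r"
      show "q = q'"
      proof
        fix x show "q x = q' x"
        proof (cases "x = l \<or> x = r")
          case True then show ?thesis using a by auto
        next
          case False
          then have "wrap l r q x = q x" "wrap l r q' x = q' x" by (auto simp: wrap_def)
          then show ?thesis using fun_cong[OF e, of x] by simp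
        qed
      qed
    qed
  qed
  have "card (SS l r) = card ((\<lambda>m. rev2 l m r) ` {l..<r}) + card (wrap l r ` SS (l+1) (r-1))"
    unfolding eq by (rule card_Un_disjoint) (use disj SS_fin in auto)
  also have "\<dots> = (r - l) + card (SS (l+1) (r-1))"
    using card_image[OF inj1'] card_image[OF inj2] by simp
  finally show ?thesis .
qed

lemma SS_card:
  fixes k :: nat
  shows "1 \<le> l \<Longrightarrow> r + 1 = l + k \<Longrightarrow> card (SS l r) = k\<^sup>2 div 4 + 1"
proof (induction k arbitrary: l r rule: less_induct)
  case (less k)
  show ?case
  proof (cases "k = 0")
    case True
    then have "r < l" using less.prems by simp
    then show ?thesis using True by (simp add: SS_empty)
  next
    case False
    then have lr: "l \<le> r" using less.prems by simp
    show ?thesis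
    proof (cases "k = 1")
      case True
      then have "r = l" using less.prems by simp
      then have "card (SS l r) = 0 + card (SS (l+1) (r-1))" using SS_rec[OF lr] by simp
      also have "SS (l+1) (r-1) = {id}" using \<open>r = l\<close> less.prems by (intro SS_empty) simp
      finally show ?thesis using True by simp
    next
      case k1: False
      define j where "j = k - 2"
      have kj: "k = j + 2" using False k1 unfolding j_def by simp
      have "card (SS (l+1) (r-1)) = j\<^sup>2 div 4 + 1"
      proof (rule less.IH)
        show "j < k" using kj by simp
        show "1 \<le> l + 1" by simp
        show "r - 1 + 1 = l + 1 + j" using kj less.prems by simp
      qed
      moreover have "r - l = j + 1" using kj less.prems by simp
      ultimately have "card (SS l r) = (j + 1) + (j\<^sup>2 div 4 + 1)" using SS_rec[OF lr] by simp
      moreover have "k\<^sup>2 = j\<^sup>2 + 4 * (j + 1)" using kj by (simp add: power2_eq_square algebra_simps)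
      ultimately show ?thesis by simp
    qed
  qed
qed



lemma avoids_iff: "avoids n p 3 pat123 \<longleftrightarrow> no123 1 n p"
proof
  assume a: "avoids n p 3 pat123"
  show "no123 1 n p"
    unfolding no123_def
  proof (intro allI impI notI)
    fix i j k assume h: "1 \<le> i" "i < j" "j < k" "k \<le> n" "p i < p j \<and> p j < p k"
    define f where "f = (\<lambda>x::nat. if x = 1 then i else if x = 2 then j else k)"
    have dom: "x \<in> {1..3} \<Longrightarrow> x = 1 \<or> x = 2 \<or> x = (3::nat)" for x by auto
    have "strict_mono_on {1..3} f"
      unfolding strict_mono_on_def
    proof (intro allI impI)
      fix x y :: nat assume "x \<in> {1..3} \<and> y \<in> {1..3} \<and> x < y"
      then show "f x < f y" using dom[of x] dom[of y] h by (auto simp: f_def)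
    qed
    moreover have "f ` {1..3} \<subseteq> {1..n}"
    proof
      fix y assume "y \<in> f ` {1..3}"
      then obtain x where "x \<in> {1..3}" "y = f x" by auto
      then show "y \<in> {1..n}" using dom[of x] h by (auto simp: f_def)
    qed
    moreover have "\<forall>x\<in>{1..3}. \<forall>y\<in>{1..3}. p (f x) < p (f y) \<longleftrightarrow> pat123 x < pat123 y"
    proof (intro ballI)
      fix x y :: nat assume "x \<in> {1..3}" "y \<in> {1..3}"
      then show "p (f x) < p (f y) \<longleftrightarrow> pat123 x < pat123 y"
        using dom[of x] dom[of y] h by (auto simp: f_def pat123_def)
    qed
    ultimately have "contains_pattern n p 3 pat123" unfolding contains_pattern_def by blast
    then show False using a by (simp add: avoids_def)
  qed
next
  assume a: "no123 1 n p"
  show "avoids n p 3 pat123"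
    unfolding avoids_def contains_pattern_def
  proof
    assume "\<exists>f. strict_mono_on {1..3} f \<and> f ` {1..3} \<subseteq> {1..n} \<and>
          (\<forall>x\<in>{1..3}. \<forall>y\<in>{1..3}. p (f x) < p (f y) \<longleftrightarrow> pat123 x < pat123 y)"
    then obtain f where sm: "strict_mono_on {1..3} f" and im: "f ` {1..3} \<subseteq> {1..n}"
      and o: "\<forall>x\<in>{1..3}. \<forall>y\<in>{1..3}. p (f x) < p (f y) \<longleftrightarrow> pat123 x < pat123 y" by blast
    have m1: "f 1 < f 2" using sm unfolding strict_mono_on_def by simp
    have m2: "f 2 < f 3" using sm unfolding strict_mono_on_def by simp
    have "f 1 \<in> {1..n}" "f 3 \<in> {1..n}" using im image_subset_iff[of f "{1..3}" "{1..n}"] by auto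
    then have b1: "1 \<le> f 1" "f 3 \<le> n" by auto
    have o1: "p (f 1) < p (f 2)" using o by (force simp: pat123_def)
    have o2: "p (f 2) < p (f 3)" using o by (force simp: pat123_def)
    show False using a m1 m2 b1 o1 o2 unfolding no123_def by blast
  qed
qed



lemma pointwise:
  fixes p :: "nat \<Rightarrow> nat"
  assumes pp: "\<And>x. p (p x) = x"
  shows "(of_bool (i<j \<and> j \<le> p i) + of_bool (i<j \<and> p j \<le> i) :: int) =
    of_bool (i<j \<and> p j < p i) + of_bool (i<j \<and> p i = j) + of_bool (i<j \<and> j<p i \<and> p i<p j)
    + of_bool (p j<i \<and> i<j \<and> j<p i) + of_bool (p i<p j \<and> p j<i \<and> i<j)
    - of_bool (i<p j \<and> p j<p i \<and> p i<j)"
proof -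
  have e1: "p i = j \<longleftrightarrow> p j = i" using pp by metis
  have e2: "p i = p j \<longleftrightarrow> i = j" using pp by metis
  show ?thesis
  proof (cases "i < j")
    case False then show ?thesis by auto
  next
    case True
    show ?thesis using True e1 e2 by (cases "p i = j") (auto simp: not_less)
  qed
qed



lemma perm_in: "p permutes {1..n} \<Longrightarrow> i \<in> {1..n} \<Longrightarrow> p i \<in> {1..n}"
  by (simp add: permutes_in_image del: atLeastAtMost_iff)

lemma disp_sum:
  fixes p :: "nat \<Rightarrow> nat"
  assumes perm: "p permutes {1..n}"
  shows "int (disp n p) = (\<Sum>i\<in>{1..n}. \<Sum>j\<in>{1..n}. of_bool (i<j \<and> j \<le> p i) + of_bool (i<j \<and> p j \<le> i))"
proof -
  let ?U = "{1..n}"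
  have step: "int (nat \<bar>int (p i) - int i\<bar>) =
      (\<Sum>j\<in>?U. of_bool (i<j \<and> j \<le> p i)) + (\<Sum>j\<in>?U. of_bool (j<i \<and> p i \<le> j))"
    if iU: "i \<in> ?U" for i
  proof -
    have piU: "p i \<in> ?U" using perm_in[OF perm iU] .
    have s1: "{Suc 0..n} \<inter> {j. i<j \<and> j \<le> p i} = {i<..p i}" using iU piU by auto
    have s2: "{Suc 0..n} \<inter> {j. j<i \<and> p i \<le> j} = {p i..<i}" using iU piU by auto
    show ?thesis by (simp add: s1 s2)
  qed
  have "int (disp n p) = (\<Sum>i\<in>?U. int (nat \<bar>int (p i) - int i\<bar>))"
    by (simp add: disp_def)
  also have "\<dots> = (\<Sum>i\<in>?U. \<Sum>j\<in>?U. of_bool (i<j \<and> j \<le> p i)) + (\<Sum>i\<in>?U. \<Sum>j\<in>?U. of_bool (j<i \<and> p i \<le> j))"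
    using step by (simp add: sum.distrib)
  also have "(\<Sum>i\<in>?U. \<Sum>j\<in>?U. of_bool (j<i \<and> p i \<le> j) :: int) = (\<Sum>i\<in>?U. \<Sum>j\<in>?U. of_bool (i<j \<and> p j \<le> i))"
    by (rule sum.swap)
  finally show ?thesis by (simp add: sum.distrib)
qed

lemma inv_sum:
  fixes p :: "nat \<Rightarrow> nat"
  shows "int (inv_count n p) = (\<Sum>i\<in>{1..n}. \<Sum>j\<in>{1..n}. of_bool (i<j \<and> p j < p i))"
proof -
  let ?U = "{1..n}"
  have "{(i, j). i \<in> ?U \<and> j \<in> ?U \<and> i < j \<and> p i > p j} = Sigma ?U (\<lambda>i. ?U \<inter> {j. i<j \<and> p j < p i})"
    by auto
  then have "inv_count n p = (\<Sum>i\<in>?U. card (?U \<inter> {j. i<j \<and> p j < p i}))"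
    by (simp add: inv_count_def)
  then show ?thesis by simp
qed



lemma orbit_inv:
  assumes pp: "\<And>x. p (p x) = x"
  shows "orbit p x = {x, p x}"
proof
  show "orbit p x \<subseteq> {x, p x}"
  proof
    fix y assume "y \<in> orbit p x"
    then show "y \<in> {x, p x}"
      by (induction rule: orbit.induct) (auto simp: pp)
  qed
  have "p x \<in> orbit p x" by (rule orbit.base)
  moreover have "p (p x) \<in> orbit p x" by (rule orbit.step[OF orbit.base])
  ultimately show "{x, p x} \<subseteq> orbit p x" using pp by auto
qed

lemma refl_sum:
  fixes p :: "nat \<Rightarrow> nat"
  assumes perm: "p permutes {1..n}" and pp: "\<And>x. p (p x) = x"
  shows "int (refl_len n p) = (\<Sum>i\<in>{1..n}. \<Sum>j\<in>{1..n}. of_bool (i<j \<and> p i = j))"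
proof -
  let ?U = "{1..n}"
  define M where "M = {i\<in>?U. i < p i}"
  define V where "V = {i\<in>?U. i \<le> p i}"
  define W where "W = {i\<in>?U. p i < i}"
  have o: "orbit p ` ?U = (\<lambda>x. {x, p x}) ` ?U" using orbit_inv[OF pp] by auto
  have o2: "(\<lambda>x. {x, p x}) ` ?U = (\<lambda>x. {x, p x}) ` V"
  proof
    show "(\<lambda>x. {x, p x}) ` V \<subseteq> (\<lambda>x. {x, p x}) ` ?U" by (auto simp: V_def)
    show "(\<lambda>x. {x, p x}) ` ?U \<subseteq> (\<lambda>x. {x, p x}) ` V"
    proof
      fix y assume "y \<in> (\<lambda>x. {x, p x}) ` ?U"
      then obtain x where x: "x \<in> ?U" "y = {x, p x}" by auto
      show "y \<in> (\<lambda>x. {x, p x}) ` V"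
      proof (cases "x \<le> p x")
        case True then show ?thesis using x by (auto simp: V_def)
      next
        case False
        have "p x \<in> ?U" using perm_in[OF perm x(1)] .
        then have "p x \<in> V" using False pp[of x] by (auto simp: V_def)
        moreover have "y = {p x, p (p x)}" using x pp by auto
        ultimately show ?thesis by blast
      qed
    qed
  qed
  have injV: "inj_on (\<lambda>x. {x, p x}) V"
  proof (rule inj_onI)
    fix x y assume xV: "x \<in> V" and yV: "y \<in> V" and e: "{x, p x} = {y, p y}"
    then have "x = y \<or> (x = p y \<and> p x = y)" by (metis doubleton_eq_iff)
    then show "x = y" using xV yV by (auto simp: V_def)
  qed
  have fin: "finite V" "finite W" "finite M" by (auto simp: V_def W_def M_def)
  have VW: "V \<union> W = ?U" "V \<inter> W = {}" by (auto simp: V_def W_def)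
  have cVW: "card V + card W = n"
    using card_Un_disjoint[OF fin(1,2) VW(2)] VW(1) by simp
  have WM: "W = p ` M"
  proof
    show "p ` M \<subseteq> W" using perm_in[OF perm] pp by (auto simp: M_def W_def)
    show "W \<subseteq> p ` M"
    proof
      fix x assume "x \<in> W"
      then have "p x \<in> M" "x = p (p x)" using perm_in[OF perm] pp by (auto simp: M_def W_def)
      then show "x \<in> p ` M" by blast
    qed
  qed
  have injp: "inj_on p M" by (rule inj_onI) (metis pp)
  have cWM: "card W = card M" using WM card_image[OF injp] by simp
  have "card (orbit p ` ?U) = card V" using o o2 card_image[OF injV] by simp
  then have lhs: "refl_len n p = card M" using cVW cWM by (simp add: refl_len_def num_cycles_def)
  have inner: "(\<Sum>j\<in>?U. of_bool (i<j \<and> p i = j) :: int) = of_bool (i < p i)" if "i \<in> ?U" for i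
  proof -
    have "(\<Sum>j\<in>?U. of_bool (i<j \<and> p i = j) :: int) = (\<Sum>j\<in>?U. if j = p i then of_bool (i < p i) else 0)"
      by (rule sum.cong) auto
    also have "\<dots> = of_bool (i < p i)" using perm_in[OF perm that] by simp
    finally show ?thesis .
  qed
  have "(\<Sum>i\<in>?U. \<Sum>j\<in>?U. of_bool (i<j \<and> p i = j) :: int) = (\<Sum>i\<in>?U. of_bool (i < p i))"
    using inner by simp
  also have "\<dots> = int (card M)" unfolding M_def by (simp add: Int_def)
  finally show ?thesis using lhs by simp
qed



lemma cross_reidx:
  fixes p :: "nat \<Rightarrow> nat" and U :: "nat set"
  assumes pU: "\<And>x. x \<in> U \<Longrightarrow> p x \<in> U" and pp: "\<And>x. p (p x) = x"
  shows "(\<Sum>i\<in>U. \<Sum>j\<in>U. of_bool (p j<i \<and> i<j \<and> j<p i) :: int) = (\<Sum>i\<in>U. \<Sum>j\<in>U. of_bool (i<j \<and> j<p i \<and> p i<p j))"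
    and "(\<Sum>i\<in>U. \<Sum>j\<in>U. of_bool (p i<p j \<and> p j<i \<and> i<j) :: int) = (\<Sum>i\<in>U. \<Sum>j\<in>U. of_bool (i<j \<and> j<p i \<and> p i<p j))"
    and "(\<Sum>i\<in>U. \<Sum>j\<in>U. of_bool (i<p j \<and> p j<p i \<and> p i<j) :: int) = (\<Sum>i\<in>U. \<Sum>j\<in>U. of_bool (i<j \<and> j<p i \<and> p i<p j))"
proof -
  let ?C = "\<lambda>(i,j). (of_bool (i<j \<and> j<p i \<and> p i<p j) :: int)"
  have R: "(\<Sum>i\<in>U. \<Sum>j\<in>U. of_bool (i<j \<and> j<p i \<and> p i<p j) :: int) = sum ?C (U \<times> U)"
    by (simp add: sum.cartesian_product)
  show "(\<Sum>i\<in>U. \<Sum>j\<in>U. of_bool (p j<i \<and> i<j \<and> j<p i) :: int) = (\<Sum>i\<in>U. \<Sum>j\<in>U. of_bool (i<j \<and> j<p i \<and> p i<p j))"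
    unfolding R sum.cartesian_product
    by (rule sum.reindex_bij_witness[where j = "\<lambda>(i,j). (p j, i)" and i = "\<lambda>(a,c). (c, p a)"])
       (auto simp: pp pU)
  show "(\<Sum>i\<in>U. \<Sum>j\<in>U. of_bool (p i<p j \<and> p j<i \<and> i<j) :: int) = (\<Sum>i\<in>U. \<Sum>j\<in>U. of_bool (i<j \<and> j<p i \<and> p i<p j))"
    unfolding R sum.cartesian_product
    by (rule sum.reindex_bij_witness[where j = "\<lambda>(i,j). (p i, p j)" and i = "\<lambda>(a,c). (p a, p c)"])
       (auto simp: pp pU)
  show "(\<Sum>i\<in>U. \<Sum>j\<in>U. of_bool (i<p j \<and> p j<p i \<and> p i<j) :: int) = (\<Sum>i\<in>U. \<Sum>j\<in>U. of_bool (i<j \<and> j<p i \<and> p i<p j))"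
    unfolding R sum.cartesian_product
    by (rule sum.reindex_bij_witness[where j = "\<lambda>(i,j). (i, p j)" and i = "\<lambda>(a,c). (a, p c)"])
       (auto simp: pp pU)
qed

lemma shallow_iff:
  fixes p :: "nat \<Rightarrow> nat"
  assumes perm: "p permutes {1..n}" and pp: "\<And>x. p (p x) = x"
  shows "shallow n p \<longleftrightarrow> noncross 1 n p"
proof -
  let ?U = "{1..n}"
  let ?X = "(\<Sum>i\<in>?U. \<Sum>j\<in>?U. of_bool (i<j \<and> j<p i \<and> p i<p j) :: int)"
  have pU: "\<And>x. x \<in> ?U \<Longrightarrow> p x \<in> ?U" using perm_in[OF perm] .
  note cr = cross_reidx[OF pU pp]
  have "int (disp n p) = (\<Sum>i\<in>?U. \<Sum>j\<in>?U.
       of_bool (i<j \<and> p j < p i) + of_bool (i<j \<and> p i = j) + of_bool (i<j \<and> j<p i \<and> p i<p j)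
    + of_bool (p j<i \<and> i<j \<and> j<p i) + of_bool (p i<p j \<and> p j<i \<and> i<j)
    - of_bool (i<p j \<and> p j<p i \<and> p i<j))"
    unfolding disp_sum[OF perm] using pointwise[of p, OF pp] by simp
  also have "\<dots> = (\<Sum>i\<in>?U. \<Sum>j\<in>?U. of_bool (i<j \<and> p j < p i)) + (\<Sum>i\<in>?U. \<Sum>j\<in>?U. of_bool (i<j \<and> p i = j))
     + ?X + (\<Sum>i\<in>?U. \<Sum>j\<in>?U. of_bool (p j<i \<and> i<j \<and> j<p i))
     + (\<Sum>i\<in>?U. \<Sum>j\<in>?U. of_bool (p i<p j \<and> p j<i \<and> i<j))
     - (\<Sum>i\<in>?U. \<Sum>j\<in>?U. of_bool (i<p j \<and> p j<p i \<and> p i<j))"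
    by (simp only: sum.distrib sum_subtractf)
  also have "\<dots> = int (inv_count n p) + int (refl_len n p) + ?X + ?X + ?X - ?X"
    by (simp only: inv_sum[symmetric] refl_sum[OF perm pp, symmetric] cr)
  finally have eq: "int (disp n p) = int (inv_count n p) + int (refl_len n p) + 2 * ?X" by simp
  have "shallow n p \<longleftrightarrow> ?X = 0" unfolding shallow_def using eq by linarith
  also have "\<dots> \<longleftrightarrow> (\<forall>i\<in>?U. \<forall>j\<in>?U. \<not> (i<j \<and> j<p i \<and> p i<p j))"
    by (simp add: sum_nonneg_eq_0_iff) blast
  also have "\<dots> \<longleftrightarrow> noncross 1 n p"
  proof
    assume a: "\<forall>i\<in>?U. \<forall>j\<in>?U. \<not> (i<j \<and> j<p i \<and> p i<p j)"
    show "noncross 1 n p" unfolding noncross_def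
    proof
      assume "\<exists>a c. 1 \<le> a \<and> a < c \<and> c < p a \<and> p a < p c \<and> p c \<le> n"
      then obtain a c where h: "1 \<le> a" "a < c" "c < p a" "p a < p c" "p c \<le> n" by blast
      have "a \<le> n"
      proof (rule ccontr)
        assume "\<not> a \<le> n" then have "p a = a" using permutes_not_in[OF perm, of a] by simp
        then show False using h by simp
      qed
      have "c \<le> n"
      proof (rule ccontr)
        assume "\<not> c \<le> n" then have "p c = c" using permutes_not_in[OF perm, of c] by simp
        then show False using h by simp
      qed
      have "a \<in> ?U" "c \<in> ?U" using h \<open>a \<le> n\<close> \<open>c \<le> n\<close> by auto
      then show False using a h by blast
    qed
  next
    assume "noncross 1 n p"
    then show "\<forall>i\<in>?U. \<forall>j\<in>?U. \<not> (i<j \<and> j<p i \<and> p i<p j)"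
      unfolding noncross_def using pU by fastforce
  qed
  finally show ?thesis .
qed

theorem theorem5p4:
  fixes n :: nat
  assumes "n \<ge> 1"
  shows "card {p. p permutes {1..n} \<and> involution p \<and> avoids n p 3 pat123 \<and> shallow n p}
           = n\<^sup>2 div 4 + 1"
proof -
  have "{p. p permutes {1..n} \<and> involution p \<and> avoids n p 3 pat123 \<and> shallow n p} = SS 1 n"
    unfolding SS_def
  proof (rule Collect_cong)
    fix p
    show "(p permutes {1..n} \<and> involution p \<and> avoids n p 3 pat123 \<and> shallow n p) \<longleftrightarrow>
          (p permutes {1..n} \<and> p \<circ> p = id \<and> no123 1 n p \<and> noncross 1 n p)"
    proof (cases "p permutes {1..n} \<and> p \<circ> p = id")
      case True
      then have pp: "\<And>x. p (p x) = x" by (simp add: comp_id_pp)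
      have s: "shallow n p \<longleftrightarrow> noncross 1 n p" using shallow_iff[OF conjunct1[OF True] pp] .
      show ?thesis using True by (simp only: s avoids_iff involution_def)
    next
      case False then show ?thesis unfolding involution_def by blast
    qed
  qed
  moreover have "card (SS 1 n) = n\<^sup>2 div 4 + 1" by (rule SS_card) simp_all
  ultimately show ?thesis by simp
qed

end
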